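(* For an integer $g\ge1$, the number of numerical semigroups of genus $g$ that are both reflective and symmetric equals $1$ if $g=1$, and equals $\tau(g-1)-1$ if $g>1$, where $\tau(n)$ denotes the number of positive divisors of $n$.
   Context: A numerical semigroup is a submonoid $S$ of $(\mathbb{N}_0,+)$ with finite complement; its genus is the number of elements of $\mathbb{N}_0\setminus S$ and $\mathrm{F}(S)$ is its largest gap. $S$ is symmetric if for every $z\in\mathbb{Z}$ exactly one of $z$ and $\mathrm{F}(S)-z$ lies in $S$. A numerical semigroup $S$ of genus $g\ge1$ is called reflective if for every $z\in\{0,1,\dots,g-1\}$ exactly one of $z$ and $z+g$ belongs to $S$. *)

theory Defs
  imports Main
begin

definition numerical_semigroup :: "nat set \<Rightarrow> bool" where
  "numerical_semigroup S \<longleftrightarrow> 0 \<in> S \<and> (\<forall>a\<in>S. \<forall>b\<in>S. a + b \<in> S) \<and> finite (UNIV - S)"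

definition genus :: "nat set \<Rightarrow> nat" where
  "genus S = card (UNIV - S)"

text \<open>Frobenius number: the largest gap (meaningful when the genus is at least 1).\<close>
definition frobenius :: "nat set \<Rightarrow> nat" where
  "frobenius S = Max (UNIV - S)"

definition symmetric_sg :: "nat set \<Rightarrow> bool" where
  "symmetric_sg S \<longleftrightarrow>
     (\<forall>z::int. (z \<in> int ` S) \<noteq> (int (frobenius S) - z \<in> int ` S))"

definition reflective :: "nat set \<Rightarrow> bool" where
  "reflective S \<longleftrightarrow> genus S \<ge> 1 \<and>
     (\<forall>z < genus S. (z \<in> S) \<noteq> (z + genus S \<in> S))"

definition num_divisors :: "nat \<Rightarrow> nat" where
  "num_divisors n = card {d. 0 < d \<and> d dvd n}"

end

theory Submission
  imports Defs
begin

definition TT :: "nat \<Rightarrow> nat \<Rightarrow> nat set" where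
  "TT g d = {x. (x < g \<and> d dvd x) \<or> (g \<le> x \<and> x < 2*g \<and> \<not> d dvd (x - g)) \<or> 2*g \<le> x}"

lemma inj_f: "inj_on (\<lambda>z. if z \<in> S then z + g else z) {..<(g::nat)}"
  by (auto simp: inj_on_def split: if_splits)

lemma gapsA:
  fixes S :: "nat set"
  assumes R: "\<forall>z<g. (z \<in> S) \<noteq> (z + g \<in> S)" and H: "\<forall>x\<ge>2*g. x \<in> S"
  shows "UNIV - S = (\<lambda>z. if z \<in> S then z + g else z) ` {..<g}"
proof
  show "UNIV - S \<subseteq> (\<lambda>z. if z \<in> S then z + g else z) ` {..<g}"
  proof
    fix x assume x: "x \<in> UNIV - S"
    hence "x < 2*g" using H by (metis DiffD2 not_le)
    show "x \<in> (\<lambda>z. if z \<in> S then z + g else z) ` {..<g}"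
    proof (cases "x < g")
      case True thus ?thesis using x by (auto intro!: image_eqI[where x=x])
    next
      case False
      hence "x - g < g" "x - g + g = x" using \<open>x < 2*g\<close> by auto
      hence "x - g \<in> S" using R x by auto
      thus ?thesis using \<open>x - g < g\<close> \<open>x - g + g = x\<close> by (auto intro!: image_eqI[where x="x-g"])
    qed
  qed
next
  show "(\<lambda>z. if z \<in> S then z + g else z) ` {..<g} \<subseteq> UNIV - S"
    using R by auto
qed

lemma gapsA_card:
  fixes S :: "nat set"
  assumes R: "\<forall>z<g. (z \<in> S) \<noteq> (z + g \<in> S)" and H: "\<forall>x\<ge>2*g. x \<in> S"
  shows "genus S = g"
  unfolding genus_def gapsA[OF R H] using card_image[OF inj_f] by simp

lemma gaps_bound:
  assumes NS: "numerical_semigroup S" and G: "genus S = g" and R: "\<forall>z<g. (z \<in> S) \<noteq> (z + g \<in> S)"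
  shows "\<forall>x\<ge>2*g. x \<in> S"
proof -
  let ?f = "\<lambda>z. if z \<in> S then z + g else z"
  have fin: "finite (UNIV - S)" using NS unfolding numerical_semigroup_def by auto
  have sub: "?f ` {..<g} \<subseteq> UNIV - S" using R by auto
  have "card (?f ` {..<g}) = g" using card_image[OF inj_f] by simp
  hence eq: "?f ` {..<g} = UNIV - S" using card_subset_eq[OF fin sub] G unfolding genus_def by simp
  show ?thesis
  proof (intro allI impI)
    fix x assume "2*g \<le> x"
    hence "x \<notin> ?f ` {..<g}" by auto
    thus "x \<in> S" using eq by auto
  qed
qed

lemma int_img: "(int (n::nat) \<in> int ` (S::nat set)) = (n \<in> S)"
  by (rule inj_image_mem_iff) (simp add: inj_on_def)
lemma sym_nat:
  assumes "symmetric_sg S" "z \<le> frobenius S"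
  shows "(z \<in> S) \<noteq> (frobenius S - z \<in> S)"
proof -
  have h: "(int z \<in> int ` S) \<noteq> (int (frobenius S) - int z \<in> int ` S)"
    using assms(1) unfolding symmetric_sg_def by (rule spec)
  have e: "int (frobenius S) - int z = int (frobenius S - z)" using assms(2) by (rule of_nat_diff[symmetric])
  from h show ?thesis unfolding e int_img .
qed

lemma sym_intro:
  assumes "frobenius S = F" "\<forall>x>F. x \<in> S" "\<forall>z\<le>F. (z \<in> S) \<noteq> (F - z \<in> S)"
  shows "symmetric_sg S"
  unfolding symmetric_sg_def
proof
  fix z :: int
  show "(z \<in> int ` S) \<noteq> (int (frobenius S) - z \<in> int ` S)"
  proof (cases "z < 0")
    case True
    hence "z \<notin> int ` S" by auto
    moreover have "int (frobenius S) - z = int (F + nat (-z))" using True assms(1) by simp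
    moreover have "F + nat (-z) \<in> S" using assms(2) True by simp
    ultimately have "int (frobenius S) - z \<in> int ` S" by (metis image_eqI)
    thus ?thesis using \<open>z \<notin> int ` S\<close> by blast
  next
    case False
    then obtain n where n: "z = int n" using zero_le_imp_eq_int[of z] by auto
    show ?thesis
    proof (cases "n \<le> F")
      case True
      have e: "int (frobenius S) - int n = int (F - n)" using True assms(1) by (simp add: of_nat_diff)
      have "(n \<in> S) \<noteq> (F - n \<in> S)" using assms(3) True by blast
      thus ?thesis unfolding n e int_img .
    next
      case False
      hence "int (frobenius S) - z < 0" using n assms(1) by simp
      hence "int (frobenius S) - z \<notin> int ` S" by auto
      moreover have "n \<in> S" using assms(2) False by simp
      moreover have "z \<in> int ` S" using \<open>n \<in> S\<close> n by simp
      ultimately show ?thesis by blast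
    qed
  qed
qed

lemma frob_fwd:
  assumes NS: "numerical_semigroup S" and G: "genus S = g" and g: "g \<ge> 1"
    and R: "\<forall>z<g. (z \<in> S) \<noteq> (z + g \<in> S)" and SY: "symmetric_sg S"
  shows "frobenius S = 2*g - 1"
proof -
  define F where "F = frobenius S"
  let ?G = "UNIV - S"
  have fin: "finite ?G" using NS unfolding numerical_semigroup_def by auto
  have "card ?G \<ge> 1" using G g unfolding genus_def by auto
  hence ne: "?G \<noteq> {}" by (intro notI) simp
  have Gle: "?G \<subseteq> {..F}" unfolding F_def frobenius_def using fin by auto
  have sy: "\<And>z. z \<le> F \<Longrightarrow> (z \<in> S) \<noteq> (F - z \<in> S)" unfolding F_def by (rule sym_nat[OF SY])
  have img: "S \<inter> {..F} = (\<lambda>z. F - z) ` ?G"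
  proof
    show "S \<inter> {..F} \<subseteq> (\<lambda>z. F - z) ` ?G"
    proof
      fix x assume x: "x \<in> S \<inter> {..F}"
      hence "F - x \<le> F" "F - (F - x) = x" by auto
      hence "F - x \<notin> S" using sy[of "F - x"] x by auto
      thus "x \<in> (\<lambda>z. F - z) ` ?G" using \<open>F - (F - x) = x\<close> by (auto intro!: image_eqI[where x="F-x"])
    qed
  next
    show "(\<lambda>z. F - z) ` ?G \<subseteq> S \<inter> {..F}"
    proof
      fix y assume "y \<in> (\<lambda>z. F - z) ` ?G"
      then obtain z where z: "z \<in> ?G" "y = F - z" by auto
      hence "z \<le> F" using Gle by auto
      thus "y \<in> S \<inter> {..F}" using sy[of z] z by auto
    qed
  qed
  have inj: "inj_on (\<lambda>z. F - z) ?G"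
  proof (rule inj_onI)
    fix x y assume "x \<in> ?G" "y \<in> ?G" "F - x = F - y"
    moreover have "x \<le> F" "y \<le> F" using Gle \<open>x \<in> ?G\<close> \<open>y \<in> ?G\<close> by auto
    ultimately show "x = y" by simp
  qed
  have c1: "card (S \<inter> {..F}) = g" using card_image[OF inj] img G unfolding genus_def by simp
  have un: "{..F} = ?G \<union> (S \<inter> {..F})" using Gle by auto
  have "F + 1 = card {..F}" by simp
  also have "\<dots> = card (?G \<union> (S \<inter> {..F}))" using un by (rule arg_cong)
  also have "\<dots> = card ?G + card (S \<inter> {..F})" by (rule card_Un_disjoint) (use fin in auto)
  finally have "F + 1 = card ?G + card (S \<inter> {..F})" .
  hence "F + 1 = 2 * g" using c1 G unfolding genus_def by simp
  thus ?thesis unfolding F_def by simp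
qed

lemma ns_add: "numerical_semigroup S \<Longrightarrow> a \<in> S \<Longrightarrow> b \<in> S \<Longrightarrow> a + b \<in> S"
  unfolding numerical_semigroup_def by blast

lemma ns_mult: "numerical_semigroup S \<Longrightarrow> d \<in> S \<Longrightarrow> k * d \<in> S"
proof (induction k)
  case 0 thus ?case unfolding numerical_semigroup_def by simp
next
  case (Suc k) thus ?case using ns_add[of S d "k*d"] by (simp add: add.commute)
qed

lemma struct_fwd:
  assumes NS: "numerical_semigroup S" and G: "genus S = g" and g: "g \<ge> 2"
    and RF: "reflective S" and SY: "symmetric_sg S"
  shows "S = TT g (LEAST x. 0 < x \<and> x \<in> S) \<and> 2 \<le> (LEAST x. 0 < x \<and> x \<in> S)
         \<and> (LEAST x. 0 < x \<and> x \<in> S) dvd (g - 1)"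
proof -
  define d where "d = (LEAST x. 0 < x \<and> x \<in> S)"
  have R: "\<forall>z<g. (z \<in> S) \<noteq> (z + g \<in> S)" using RF G unfolding reflective_def by auto
  have H: "\<forall>x\<ge>2*g. x \<in> S" using gaps_bound[OF NS G R] .
  have F: "frobenius S = 2*g - 1" using frob_fwd[OF NS G _ R SY] g by simp
  have sy: "\<And>z. z \<le> 2*g-1 \<Longrightarrow> (z \<in> S) \<noteq> (2*g - 1 - z \<in> S)" by (rule sym_nat[OF SY, unfolded F])
  have zero: "0 \<in> S" using NS unfolding numerical_semigroup_def by auto
  have F_gap: "2*g - 1 \<notin> S" using sy[of 0] zero by simp
  have gm1a: "g - 1 < g" "g - 1 + g = 2*g - 1" using g by auto
  have gm1: "g - 1 \<in> S" using R[rule_format, OF gm1a(1)] F_gap unfolding gm1a(2) by simp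
  have gnot: "g \<notin> S" using R[rule_format, of 0] zero g by simp
  have P: "\<And>x. x < g \<Longrightarrow> x \<in> S \<Longrightarrow> g - 1 - x \<in> S"
  proof -
    fix x assume x: "x < g" "x \<in> S"
    hence "x + g \<notin> S" using R by auto
    moreover have "2*g - 1 - (g - 1 - x) = x + g" using x by simp
    moreover have "g - 1 - x \<le> 2*g - 1" by simp
    ultimately show "g - 1 - x \<in> S" using sy[of "g-1-x"] by auto
  qed
  have Df: "\<And>x y. x \<in> S \<Longrightarrow> y \<in> S \<Longrightarrow> x \<le> y \<Longrightarrow> y < g \<Longrightarrow> y - x \<in> S"
  proof -
    fix x y assume xy: "x \<in> S" "y \<in> S" "x \<le> y" "y < g"
    have "g - 1 - y + x \<in> S" using ns_add[OF NS P[OF xy(4,2)] xy(1)] .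
    moreover have "g - 1 - y + x = g - 1 - (y - x)" using xy by simp
    ultimately have "g - 1 - (y - x) \<in> S" by simp
    moreover have "g - 1 - (y - x) < g" using g by simp
    ultimately have "g - 1 - (g - 1 - (y - x)) \<in> S" using P by blast
    moreover have "g - 1 - (g - 1 - (y - x)) = y - x" using xy by simp
    ultimately show "y - x \<in> S" by simp
  qed
  have one: "1 \<notin> S"
  proof
    assume "1 \<in> S"
    hence "g * 1 \<in> S" using ns_mult[OF NS] by blast
    thus False using gnot by simp
  qed
  have ex: "0 < g - 1 \<and> g - 1 \<in> S" using gm1 g by simp
  have dS: "0 < d \<and> d \<in> S" unfolding d_def using LeastI[of "\<lambda>x. 0 < x \<and> x \<in> S" "g - 1"] ex by blast
  have dle: "d \<le> g - 1" unfolding d_def using Least_le[of "\<lambda>x. 0 < x \<and> x \<in> S" "g - 1"] ex by blast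
  have d2: "2 \<le> d" using dS one by (cases "d = 1") auto
  have min: "\<And>y. 0 < y \<Longrightarrow> y < d \<Longrightarrow> y \<notin> S" unfolding d_def using not_less_Least by blast
  have modS: "\<And>x. x < g \<Longrightarrow> x \<in> S \<Longrightarrow> x mod d \<in> S"
  proof -
    fix x show "x < g \<Longrightarrow> x \<in> S \<Longrightarrow> x mod d \<in> S"
    proof (induction x rule: less_induct)
      case (less x)
      show ?case
      proof (cases "x < d")
        case True thus ?thesis using less by simp
      next
        case False
        hence "x - d \<in> S" using Df[of d x] dS less by simp
        moreover have "x - d < x" "x - d < g" using dS False less by auto
        ultimately have "(x - d) mod d \<in> S" using less.IH[of "x - d"] by blast
        moreover have "(x - d) mod d = x mod d" using False by (simp add: mod_if)
        ultimately show ?thesis by simp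
      qed
    qed
  qed
  have lowS: "\<And>x. x < g \<Longrightarrow> (x \<in> S) = (d dvd x)"
  proof -
    fix x assume x: "x < g"
    show "(x \<in> S) = (d dvd x)"
    proof
      assume "x \<in> S"
      hence "x mod d \<in> S" using modS x by simp
      moreover have "x mod d < d" using dS by simp
      ultimately have "x mod d = 0" using min by (metis not_gr0)
      thus "d dvd x" by auto
    next
      assume "d dvd x"
      then obtain k where "x = k * d" by (metis dvd_def mult.commute)
      thus "x \<in> S" using ns_mult[OF NS] dS by simp
    qed
  qed
  have ddvd: "d dvd g - 1" using lowS[of "g-1"] gm1 g by simp
  have "S = TT g d"
  proof (rule set_eqI)
    fix x
    show "(x \<in> S) = (x \<in> TT g d)"
    proof (cases "x < g")
      case True thus ?thesis using lowS[OF True] unfolding TT_def by auto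
    next
      case False
      show ?thesis
      proof (cases "x < 2*g")
        case True
        have "x - g < g" "x - g + g = x" using True False by auto
        hence "(x \<in> S) = (\<not> d dvd (x - g))" using R[rule_format, of "x-g"] lowS[of "x-g"] by simp
        thus ?thesis using True False unfolding TT_def by auto
      next
        case False2: False
        thus ?thesis using H unfolding TT_def by auto
      qed
    qed
  qed
  thus ?thesis using d2 ddvd unfolding d_def[symmetric] by blast
qed

lemma dvd_sub_iff: "(d::nat) dvd (g - 1) \<Longrightarrow> w \<le> g - 1 \<Longrightarrow> d dvd (g - 1 - w) \<longleftrightarrow> d dvd w"
proof
  assume a: "d dvd (g - 1)" "w \<le> g - 1" "d dvd (g - 1 - w)"
  have "d dvd (g - 1) - (g - 1 - w)" using dvd_diff_nat[OF a(1) a(3)] .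
  thus "d dvd w" using a(2) by (metis diff_diff_cancel)
next
  assume a: "d dvd (g - 1)" "w \<le> g - 1" "d dvd w"
  show "d dvd (g - 1 - w)" using dvd_diff_nat[OF a(1) a(3)] .
qed

lemma TT_props:
  assumes g: "g \<ge> 2" and d2: "2 \<le> d" and dd: "d dvd (g - 1)"
  shows "numerical_semigroup (TT g d) \<and> genus (TT g d) = g \<and> reflective (TT g d)
         \<and> symmetric_sg (TT g d) \<and> (LEAST x. 0 < x \<and> x \<in> TT g d) = d"
proof -
  let ?T = "TT g d"
  have ng: "\<not> d dvd g"
  proof
    assume "d dvd g"
    hence "d dvd g - (g - 1)" using dvd_diff_nat[OF _ dd] by blast
    hence "d dvd 1" using g by simp
    thus False using d2 by simp
  qed
  have dle: "d \<le> g - 1" using dd g by (simp add: dvd_imp_le)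
  have R: "\<forall>z<g. (z \<in> ?T) \<noteq> (z + g \<in> ?T)" unfolding TT_def by auto
  have H: "\<forall>x\<ge>2*g. x \<in> ?T" unfolding TT_def by auto
  have gen: "genus ?T = g" by (rule gapsA_card[OF R H])
  have add: "\<forall>a\<in>?T. \<forall>b\<in>?T. a + b \<in> ?T"
  proof (intro ballI)
    fix a b assume a: "a \<in> ?T" and b: "b \<in> ?T"
    have lowlow: "\<And>x y. x < g \<Longrightarrow> d dvd x \<Longrightarrow> y < g \<Longrightarrow> d dvd y \<Longrightarrow> x + y \<in> ?T"
    proof -
      fix x y assume h: "x < g" "d dvd x" "y < g" "d dvd y"
      have s: "d dvd x + y" using h by simp
      show "x + y \<in> ?T"
      proof (cases "x + y < g")
        case True thus ?thesis using s unfolding TT_def by auto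
      next
        case False
        have "\<not> d dvd (x + y - g)"
        proof
          assume "d dvd (x + y - g)"
          hence "d dvd (x + y) - (x + y - g)" using dvd_diff_nat[OF s] by blast
          thus False using ng False by simp
        qed
        thus ?thesis using False h unfolding TT_def by auto
      qed
    qed
    have lowmid: "\<And>x y. x < g \<Longrightarrow> d dvd x \<Longrightarrow> g \<le> y \<Longrightarrow> \<not> d dvd (y - g) \<Longrightarrow> x + y \<in> ?T"
    proof -
      fix x y assume h: "x < g" "d dvd x" "g \<le> y" "\<not> d dvd (y - g)"
      show "x + y \<in> ?T"
      proof (cases "x + y < 2*g")
        case True
        have "x + y - g = x + (y - g)" using h by simp
        moreover have "d dvd x + (y - g) \<longleftrightarrow> d dvd (y - g)" using dvd_add_right_iff[OF h(2)] .
        ultimately have "\<not> d dvd (x + y - g)" using h by simp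
        thus ?thesis using True h unfolding TT_def by auto
      next
        case False thus ?thesis unfolding TT_def by auto
      qed
    qed
    have ca: "(a < g \<and> d dvd a) \<or> g \<le> a" using a unfolding TT_def by auto
    have cb: "(b < g \<and> d dvd b) \<or> g \<le> b" using b unfolding TT_def by auto
    have ma: "g \<le> a \<Longrightarrow> a < 2*g \<Longrightarrow> \<not> d dvd (a - g)" using a unfolding TT_def by auto
    have mb: "g \<le> b \<Longrightarrow> b < 2*g \<Longrightarrow> \<not> d dvd (b - g)" using b unfolding TT_def by auto
    have hi2: "2*g \<le> a + b \<Longrightarrow> a + b \<in> ?T" unfolding TT_def by auto
    show "a + b \<in> ?T"
    proof (cases "a < g \<and> d dvd a")
      case A: True
      show ?thesis
      proof (cases "b < g \<and> d dvd b")
        case True thus ?thesis using A lowlow by blast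
      next
        case False
        hence "g \<le> b" using cb by blast
        show ?thesis
        proof (cases "b < 2*g")
          case True thus ?thesis using A \<open>g \<le> b\<close> mb lowmid by blast
        next
          case False thus ?thesis using hi2 by simp
        qed
      qed
    next
      case AF: False
      hence "g \<le> a" using ca by blast
      show ?thesis
      proof (cases "b < g \<and> d dvd b")
        case B: True
        show ?thesis
        proof (cases "a < 2*g")
          case True hence "b + a \<in> ?T" using B \<open>g \<le> a\<close> ma lowmid by blast
          thus ?thesis by (simp add: add.commute)
        next
          case False thus ?thesis using hi2 by simp
        qed
      next
        case False
        hence "g \<le> b" using cb by blast
        thus ?thesis using \<open>g \<le> a\<close> hi2 by simp
      qed
    qed
  qed
  have ns: "numerical_semigroup ?T" unfolding numerical_semigroup_def
  proof (intro conjI)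
    show "0 \<in> ?T" using g unfolding TT_def by auto
    show "\<forall>a\<in>?T. \<forall>b\<in>?T. a + b \<in> ?T" by (rule add)
    have "UNIV - ?T \<subseteq> {..<2*g}" unfolding TT_def by auto
    thus "finite (UNIV - ?T)" using finite_subset by blast
  qed
  have refl: "reflective ?T" unfolding reflective_def gen using R g by auto
  have gapeq: "UNIV - ?T = (\<lambda>z. if z \<in> ?T then z + g else z) ` {..<g}" by (rule gapsA[OF R H])
  have fin: "finite (UNIV - ?T)" unfolding gapeq by simp
  have gapF: "2*g - 1 \<in> UNIV - ?T"
  proof -
    have "2*g - 1 - g = g - 1" by simp
    thus ?thesis using dd g unfolding TT_def by auto
  qed
  have frob: "frobenius ?T = 2*g - 1" unfolding frobenius_def
  proof (rule Max_eqI[OF fin])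
    fix y assume "y \<in> UNIV - ?T"
    hence "y < 2*g" using H by (metis DiffD2 not_le)
    thus "y \<le> 2*g - 1" by simp
  qed (rule gapF)
  have sym: "symmetric_sg ?T"
  proof (rule sym_intro[OF frob])
    show "\<forall>x>2*g - 1. x \<in> ?T" unfolding TT_def by auto
    show "\<forall>z\<le>2*g - 1. (z \<in> ?T) \<noteq> (2*g - 1 - z \<in> ?T)"
    proof (intro allI impI)
      fix z assume z: "z \<le> 2*g - 1"
      show "(z \<in> ?T) \<noteq> (2*g - 1 - z \<in> ?T)"
      proof (cases "z < g")
        case True
        have e: "2*g - 1 - z - g = g - 1 - z" by simp
        have "d dvd (g - 1 - z) \<longleftrightarrow> d dvd z" using dvd_sub_iff[OF dd] True by simp
        thus ?thesis using True e g unfolding TT_def by auto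
      next
        case False
        define w where "w = 2*g - 1 - z"
        have w: "w < g" "z - g = g - 1 - w" using False z g unfolding w_def by auto
        have "d dvd (g - 1 - w) \<longleftrightarrow> d dvd w" using dvd_sub_iff[OF dd] w by simp
        thus ?thesis using False w z unfolding TT_def w_def[symmetric] by auto
      qed
    qed
  qed
  have least: "(LEAST x. 0 < x \<and> x \<in> ?T) = d"
  proof (rule Least_equality)
    show "0 < d \<and> d \<in> ?T" using d2 dle g unfolding TT_def by auto
    fix y assume y: "0 < y \<and> y \<in> ?T"
    show "d \<le> y"
    proof (rule ccontr)
      assume "\<not> d \<le> y"
      hence "y < d" "y < g" using dle g by auto
      hence "d dvd y" using y unfolding TT_def by auto
      thus False using \<open>y < d\<close> y by (simp add: nat_dvd_not_less)
    qed
  qed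
  show ?thesis using ns gen refl sym least by simp
qed

lemma case1: "{S. numerical_semigroup S \<and> genus S = 1 \<and> reflective S \<and> symmetric_sg S} = {UNIV - {1}}"
proof (rule set_eqI, rule iffI)
  fix S assume "S \<in> {S. numerical_semigroup S \<and> genus S = 1 \<and> reflective S \<and> symmetric_sg S}"
  hence NS: "numerical_semigroup S" and G: "genus S = 1" and RF: "reflective S" by auto
  have R: "\<forall>z<1. (z \<in> S) \<noteq> (z + 1 \<in> S)" using RF G unfolding reflective_def by auto
  have H: "\<forall>x\<ge>2*1. x \<in> S" using gaps_bound[OF NS G R] .
  have "UNIV - S = (\<lambda>z. if z \<in> S then z + 1 else z) ` {..<1}" by (rule gapsA[OF R H])
  moreover have "0 \<in> S" using NS unfolding numerical_semigroup_def by auto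
  ultimately have "UNIV - S = {1}" by (simp add: lessThan_Suc)
  thus "S \<in> {UNIV - {1}}" by auto
next
  fix S assume "S \<in> {UNIV - {1::nat}}"
  hence S: "S = UNIV - {1}" by simp
  have R: "\<forall>z<1. (z \<in> S) \<noteq> (z + 1 \<in> S)" using S by auto
  have H: "\<forall>x\<ge>2*1. x \<in> S" using S by auto
  have G: "genus S = 1" by (rule gapsA_card[OF R H])
  have NS: "numerical_semigroup S" unfolding numerical_semigroup_def S
  proof (intro conjI ballI)
    fix a b :: nat assume "a \<in> UNIV - {1}" "b \<in> UNIV - {1}"
    thus "a + b \<in> UNIV - {1}" by auto
  next
    show "(0::nat) \<in> UNIV - {1}" by simp
  next
    have "UNIV - (UNIV - {1::nat}) = {1}" by auto
    thus "finite (UNIV - (UNIV - {1::nat}))" by simp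
  qed
  have "UNIV - (UNIV - {1::nat}) = {1}" by auto
  hence fr: "frobenius S = 1" unfolding frobenius_def S by simp
  have SY: "symmetric_sg S"
  proof (rule sym_intro[OF fr])
    show "\<forall>x>1. x \<in> S" using S by auto
    show "\<forall>z\<le>1. (z \<in> S) \<noteq> (1 - z \<in> S)" using S by (auto simp: le_Suc_eq)
  qed
  have RF: "reflective S" unfolding reflective_def G using R by auto
  show "S \<in> {S. numerical_semigroup S \<and> genus S = 1 \<and> reflective S \<and> symmetric_sg S}"
    using NS G RF SY by auto
qed

lemma case2:
  assumes g: "g \<ge> 2"
  shows "{S. numerical_semigroup S \<and> genus S = g \<and> reflective S \<and> symmetric_sg S}
         = TT g ` {d. 2 \<le> d \<and> d dvd (g - 1)}"
proof (rule set_eqI, rule iffI)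
  fix S assume "S \<in> {S. numerical_semigroup S \<and> genus S = g \<and> reflective S \<and> symmetric_sg S}"
  hence h: "numerical_semigroup S" "genus S = g" "reflective S" "symmetric_sg S" by auto
  have "S = TT g (LEAST x. 0 < x \<and> x \<in> S) \<and> 2 \<le> (LEAST x. 0 < x \<and> x \<in> S)
         \<and> (LEAST x. 0 < x \<and> x \<in> S) dvd (g - 1)" by (rule struct_fwd[OF h(1,2) g h(3,4)])
  thus "S \<in> TT g ` {d. 2 \<le> d \<and> d dvd (g - 1)}" by (intro image_eqI[where x="LEAST x. 0 < x \<and> x \<in> S"]) auto
next
  fix S assume "S \<in> TT g ` {d. 2 \<le> d \<and> d dvd (g - 1)}"
  then obtain d where d: "S = TT g d" "2 \<le> d" "d dvd (g - 1)" by blast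
  have "numerical_semigroup (TT g d) \<and> genus (TT g d) = g \<and> reflective (TT g d)
         \<and> symmetric_sg (TT g d)" using TT_props[OF g d(2,3)] by blast
  thus "S \<in> {S. numerical_semigroup S \<and> genus S = g \<and> reflective S \<and> symmetric_sg S}"
    using d(1) by simp
qed

lemma case2_card:
  assumes g: "g \<ge> 2"
  shows "card (TT g ` {d. 2 \<le> d \<and> d dvd (g - 1)}) = num_divisors (g - 1) - 1"
proof -
  let ?D = "{d. 2 \<le> d \<and> d dvd (g - 1)}"
  have inj: "inj_on (TT g) ?D"
  proof (rule inj_onI)
    fix x y assume "x \<in> ?D" "y \<in> ?D" "TT g x = TT g y"
    hence xy: "2 \<le> x" "x dvd (g - 1)" "2 \<le> y" "y dvd (g - 1)" by auto
    have hx: "(LEAST z. 0 < z \<and> z \<in> TT g x) = x" using TT_props[OF g xy(1,2)] by blast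
    have hy: "(LEAST z. 0 < z \<and> z \<in> TT g y) = y" using TT_props[OF g xy(3,4)] by blast
    have "x = (LEAST z. 0 < z \<and> z \<in> TT g x)" using hx by (rule sym)
    also have "\<dots> = (LEAST z. 0 < z \<and> z \<in> TT g y)" by (simp only: \<open>TT g x = TT g y\<close>)
    also have "\<dots> = y" by (rule hy)
    finally show "x = y" .
  qed
  have eq: "{d. 0 < d \<and> d dvd (g - 1)} = insert 1 ?D"
  proof (rule set_eqI)
    fix d :: nat
    show "(d \<in> {d. 0 < d \<and> d dvd (g - 1)}) = (d \<in> insert 1 ?D)"
    proof (cases "d = 0")
      case True thus ?thesis using g by simp
    next
      case False thus ?thesis by (cases "d = 1") auto
    qed
  qed
  have sub: "?D \<subseteq> {..g-1}"
  proof
    fix d assume "d \<in> ?D"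
    hence "d dvd (g - 1)" by simp
    moreover have "0 < g - 1" using g by simp
    ultimately show "d \<in> {..g-1}" using dvd_imp_le by simp
  qed
  have fin: "finite ?D" using finite_subset[OF sub] by simp
  have n1: "1 \<notin> ?D" by simp
  have "num_divisors (g - 1) = Suc (card ?D)" unfolding num_divisors_def eq
    by (rule card_insert_disjoint[OF fin n1])
  thus ?thesis using card_image[OF inj] by simp
qed

theorem mainTheorem16:
  fixes g :: nat
  assumes "g \<ge> 1"
  shows "card {S. numerical_semigroup S \<and> genus S = g \<and> reflective S \<and> symmetric_sg S}
           = (if g = 1 then 1 else num_divisors (g - 1) - 1)"
proof (cases "g = 1")
  case True thus ?thesis using case1 by simp
next
  case False
  hence "g \<ge> 2" using assms by simp
  thus ?thesis using case2 case2_card False by simp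
qed

end
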